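(* Let $T$ be the linear operator on $L^2(0,\pi/2)$ defined by $$(Tf)(v)=\int_0^{\pi/2} f(u)K_1(u,v)\,du=\int_0^{(\pi/2)-v} f(u)\,du,$$ where $K_1(u,v)=1$ if $u+v<\pi/2$ and $K_1(u,v)=0$ otherwise. Then $T$ is a compact self-adjoint operator. Its eigenvalues are exactly the numbers $1/(4k+1)$ for $k\in\mathbf{Z}$, each of multiplicity one, and the corresponding eigenfunctions, which are mutually orthogonal, are $u\mapsto\cos((4k+1)u)$. *)

theory Defs
  imports "HOL-Analysis.Analysis"
begin

text \<open>The interval (0, pi/2) with Lebesgue measure; real-valued L^2 is modelled by
  measurable square-integrable functions, equality in L^2 being equality almost everywhere.\<close>

definition Ihalf :: "real set" where
  "Ihalf = {0<..<pi/2}"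

abbreviation M :: "real measure" where
  "M \<equiv> lebesgue_on Ihalf"

definition sq_int :: "(real \<Rightarrow> real) \<Rightarrow> bool" where
  "sq_int f \<longleftrightarrow> f \<in> borel_measurable M \<and> integrable M (\<lambda>u. (f u)^2)"

definition l2_inner :: "(real \<Rightarrow> real) \<Rightarrow> (real \<Rightarrow> real) \<Rightarrow> real" where
  "l2_inner f g = (LINT u|M. f u * g u)"

definition l2_norm :: "(real \<Rightarrow> real) \<Rightarrow> real" where
  "l2_norm f = sqrt (l2_inner f f)"

definition K1 :: "real \<Rightarrow> real \<Rightarrow> real" where
  "K1 u v = (if u + v < pi/2 then 1 else 0)"

definition Top :: "(real \<Rightarrow> real) \<Rightarrow> (real \<Rightarrow> real)" where
  "Top f v = (LINT u|M. f u * K1 u v)"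

definition compact_op :: "((real \<Rightarrow> real) \<Rightarrow> (real \<Rightarrow> real)) \<Rightarrow> bool" where
  "compact_op T \<longleftrightarrow> (\<forall>f. sq_int f \<longrightarrow> sq_int (T f)) \<and>
     (\<forall>fs :: nat \<Rightarrow> real \<Rightarrow> real. (\<forall>n. sq_int (fs n)) \<and> (\<exists>B. \<forall>n. l2_norm (fs n) \<le> B) \<longrightarrow>
        (\<exists>r g. strict_mono r \<and> sq_int g \<and>
           (\<lambda>n. l2_norm (\<lambda>v. T (fs (r n)) v - g v)) \<longlonglongrightarrow> 0))"

definition self_adjoint_op :: "((real \<Rightarrow> real) \<Rightarrow> (real \<Rightarrow> real)) \<Rightarrow> bool" where
  "self_adjoint_op T \<longleftrightarrow> (\<forall>f g. sq_int f \<and> sq_int g \<longrightarrow> l2_inner (T f) g = l2_inner f (T g))"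

definition eigenspace_op :: "((real \<Rightarrow> real) \<Rightarrow> (real \<Rightarrow> real)) \<Rightarrow> real \<Rightarrow> (real \<Rightarrow> real) set" where
  "eigenspace_op T \<mu> = {f. sq_int f \<and> (AE v in M. T f v = \<mu> * f v)}"

definition is_eigenvalue :: "((real \<Rightarrow> real) \<Rightarrow> (real \<Rightarrow> real)) \<Rightarrow> real \<Rightarrow> bool" where
  "is_eigenvalue T \<mu> \<longleftrightarrow> (\<exists>f \<in> eigenspace_op T \<mu>. \<not> (AE u in M. f u = 0))"

end

theory Submission
  imports Defs "HOL-Library.Diagonal_Subsequence"
begin

lemma Ihalf_sets[simp]: "Ihalf \<in> sets lebesgue"
  by (simp add: Ihalf_def)
lemma Ihalf_lmeas: "Ihalf \<in> lmeasurable"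
  unfolding Ihalf_def by simp
lemma fin_M: "finite_measure M"
  by (rule finite_measure_lebesgue_on[OF Ihalf_lmeas])
lemma measure_M: "measure M Ihalf = pi/2"
  using Ihalf_lmeas by (simp add: measure_restrict_space Ihalf_def)

lemma meas_id[measurable]: "(\<lambda>x. x) \<in> borel_measurable (lebesgue_on S)"
  using id_borel_measurable_lebesgue_on by (simp add: id_def)

lemma K1_meas[measurable]: "(\<lambda>u. K1 u v) \<in> borel_measurable (lebesgue_on S)"
  unfolding K1_def by measurable

lemma integrable_const_M[simp]: "integrable M (\<lambda>x. c::real)"
  using finite_measure.integrable_const[OF fin_M] .

lemma bounded_integrable_M:
  fixes h :: "real \<Rightarrow> real"
  assumes "h \<in> borel_measurable M" "\<And>x. x \<in> Ihalf \<Longrightarrow> \<bar>h x\<bar> \<le> C"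
  shows "integrable M h"
  by (rule Bochner_Integration.integrable_bound[OF integrable_const_M[of C]])
     (use assms in \<open>auto intro!: AE_I2 intro: order_trans[OF _ abs_ge_self]\<close>)

lemma abs_le_quad:
  fixes a t :: real assumes t: "t > 0"
  shows "\<bar>a\<bar> \<le> t * a^2 + 1 / (4*t)"
proof -
  have "0 \<le> (2*t*\<bar>a\<bar> - 1)^2" by simp
  hence "4*t*\<bar>a\<bar> \<le> 4*t*(t*a^2) + 1"
    by (cases "a \<ge> 0") (auto simp: power2_eq_square algebra_simps)
  hence "4*t*\<bar>a\<bar> \<le> 4*t*(t*a^2 + 1/(4*t))" using t by (simp add: algebra_simps)
  thus ?thesis using t by simp
qed

lemma sq_int_integrable:
  assumes "sq_int f" shows "integrable M f"
proof -
  have m: "f \<in> borel_measurable M" and i: "integrable M (\<lambda>u. (f u)^2)"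
    using assms by (auto simp: sq_int_def)
  have ii: "integrable M (\<lambda>u. (f u)^2 + 1)" using i by simp
  have b: "\<bar>f u\<bar> \<le> (f u)^2 + 1" for u
    using abs_le_quad[of 1 "f u"] by simp
  show ?thesis
    by (rule Bochner_Integration.integrable_bound[OF ii]) (use m b in \<open>auto intro!: AE_I2 intro: order_trans[OF _ abs_ge_self]\<close>)
qed

lemma sq_int_meas: "sq_int f \<Longrightarrow> f \<in> borel_measurable M"
  by (simp add: sq_int_def)

lemma fK_integrable: assumes "sq_int f" shows "integrable M (\<lambda>u. f u * K1 u v)"
proof -
  have [measurable]: "f \<in> borel_measurable M" using assms by (simp add: sq_int_def)
  show ?thesis
    by (rule Bochner_Integration.integrable_bound[OF sq_int_integrable[OF assms]])
       (auto simp: K1_def intro!: AE_I2)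
qed

lemma measure_M_Icc: "measure M ({a..b} \<inter> Ihalf) \<le> \<bar>b - a\<bar>"
proof -
  have "measure M ({a..b} \<inter> Ihalf) = measure lebesgue ({a..b} \<inter> Ihalf)"
    by (subst measure_restrict_space) auto
  also have "\<dots> \<le> measure lebesgue {a..b}"
    by (rule measure_mono_fmeasurable) auto
  also have "\<dots> \<le> \<bar>b - a\<bar>" by simp
  finally show ?thesis .
qed

lemma K1_diff_le: "\<bar>K1 u x - K1 u y\<bar> \<le> indicator {pi/2 - max x y .. pi/2 - min x y} u"
  by (auto simp: K1_def indicator_def max_def min_def)

lemma int_K1_diff: "(LINT u|M. \<bar>K1 u x - K1 u y\<bar>) \<le> \<bar>x - y\<bar>"
proof -
  have "(LINT u|M. \<bar>K1 u x - K1 u y\<bar>) \<le> (LINT u|M. indicator {pi/2 - max x y .. pi/2 - min x y} u)"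
    by (rule integral_mono) (auto simp: K1_diff_le intro!: bounded_integrable_M[where C=1] simp: indicator_def K1_def)
  also have "\<dots> = measure M ({pi/2 - max x y .. pi/2 - min x y} \<inter> Ihalf)"
    by (simp add: integral_indicator)
  also have "\<dots> \<le> \<bar>(pi/2 - min x y) - (pi/2 - max x y)\<bar>"
    by (rule measure_M_Icc)
  also have "\<dots> = \<bar>x - y\<bar>" by (auto simp: max_def min_def)
  finally show ?thesis .
qed

definition S2 :: "(real \<Rightarrow> real) \<Rightarrow> real" where "S2 f = (LINT u|M. (f u)^2)"

lemma S2_nonneg: "S2 f \<ge> 0" unfolding S2_def by simp

lemma Top_diff:
  assumes f: "sq_int f" and t: "t > 0"
  shows "\<bar>Top f x - Top f y\<bar> \<le> t * S2 f + \<bar>x - y\<bar> / (4*t)"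
proof -
  have [measurable]: "f \<in> borel_measurable M" using f by (simp add: sq_int_def)
  have i2: "integrable M (\<lambda>u. (f u)^2)" using f by (simp add: sq_int_def)
  have iD: "integrable M (\<lambda>u. \<bar>K1 u x - K1 u y\<bar>)"
    by (rule bounded_integrable_M[where C=1]) (auto simp: K1_def)
  have "Top f x - Top f y = (LINT u|M. f u * (K1 u x - K1 u y))"
    unfolding Top_def using fK_integrable[OF f]
    by (simp add: right_diff_distrib)
  also have "\<bar>\<dots>\<bar> \<le> (LINT u|M. \<bar>f u * (K1 u x - K1 u y)\<bar>)"
    by (rule integral_abs_bound)
  also have "\<dots> \<le> (LINT u|M. t * (f u)^2 + \<bar>K1 u x - K1 u y\<bar> / (4*t))"
  proof (rule integral_mono)
    show "integrable M (\<lambda>u. \<bar>f u * (K1 u x - K1 u y)\<bar>)"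
      using fK_integrable[OF f, of x] fK_integrable[OF f, of y]
      by (simp add: right_diff_distrib)
    show "integrable M (\<lambda>u. t * (f u)^2 + \<bar>K1 u x - K1 u y\<bar> / (4*t))"
      using i2 iD by simp
    fix u
    have d: "\<bar>K1 u x - K1 u y\<bar> = 0 \<or> \<bar>K1 u x - K1 u y\<bar> = 1" by (auto simp: K1_def)
    have "\<bar>f u\<bar> \<le> t * (f u)^2 + 1/(4*t)" by (rule abs_le_quad[OF t])
    moreover have "0 \<le> t * (f u)^2" using t by simp
    ultimately show "\<bar>f u * (K1 u x - K1 u y)\<bar> \<le> t * (f u)^2 + \<bar>K1 u x - K1 u y\<bar> / (4*t)"
      using d by (auto simp: abs_mult)
  qed
  also have "\<dots> = t * S2 f + (LINT u|M. \<bar>K1 u x - K1 u y\<bar>) / (4*t)"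
    using i2 iD by (simp add: S2_def)
  also have "\<dots> \<le> t * S2 f + \<bar>x - y\<bar> / (4*t)"
    using int_K1_diff[of x y] t by (simp add: divide_right_mono)
  finally show ?thesis .
qed

lemma Top_bound:
  assumes f: "sq_int f"
  shows "\<bar>Top f x\<bar> \<le> S2 f + pi/8"
proof -
  have [measurable]: "f \<in> borel_measurable M" using f by (simp add: sq_int_def)
  have i2: "integrable M (\<lambda>u. (f u)^2)" using f by (simp add: sq_int_def)
  have "\<bar>Top f x\<bar> \<le> (LINT u|M. \<bar>f u * K1 u x\<bar>)"
    unfolding Top_def by (rule integral_abs_bound)
  also have "\<dots> \<le> (LINT u|M. (f u)^2 + 1/4)"
  proof (rule integral_mono)
    show "integrable M (\<lambda>u. \<bar>f u * K1 u x\<bar>)"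
      using fK_integrable[OF f, of x] by simp
    show "integrable M (\<lambda>u. (f u)^2 + 1/4)" using i2 by simp
    fix u
    have "\<bar>f u\<bar> \<le> 1 * (f u)^2 + 1/(4*1)" by (rule abs_le_quad) simp
    then show "\<bar>f u * K1 u x\<bar> \<le> (f u)^2 + 1/4"
      by (auto simp: K1_def abs_mult)
  qed
  also have "\<dots> = S2 f + measure M Ihalf / 4"
    using i2 by (simp add: S2_def)
  also have "\<dots> = S2 f + pi/8" by (simp add: measure_M)
  finally show ?thesis .
qed

lemma Top_cont:
  assumes f: "sq_int f"
  shows "continuous_on UNIV (Top f)"
  unfolding continuous_on_iff
proof safe
  fix x :: real and e :: real assume e: "e > 0"
  define t where "t = e / (2 * (S2 f + 1))"
  have t: "t > 0" using e S2_nonneg[of f] by (simp add: t_def)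
  have tS: "t * S2 f < e/2"
    using e S2_nonneg[of f] by (simp add: t_def field_simps)
  show "\<exists>d>0. \<forall>y\<in>UNIV. dist y x < d \<longrightarrow> dist (Top f y) (Top f x) < e"
  proof (intro exI[of _ "2*t*e"] conjI ballI impI)
    show "2*t*e > 0" using t e by simp
    fix y assume "dist y x < 2*t*e"
    hence "\<bar>y - x\<bar> / (4*t) < e/2" using t by (simp add: dist_real_def field_simps)
    thus "dist (Top f y) (Top f x) < e"
      using Top_diff[OF f t, of y x] tS by (simp add: dist_real_def)
  qed
qed

lemma Top_meas: "sq_int f \<Longrightarrow> Top f \<in> borel_measurable M"
  by (rule continuous_imp_measurable_on_sets_lebesgue[OF continuous_on_subset[OF Top_cont]]) auto

lemma Top_sq_int: assumes "sq_int f" shows "sq_int (Top f)"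
  unfolding sq_int_def
proof
  show m: "Top f \<in> borel_measurable M" by (rule Top_meas[OF assms])
  show "integrable M (\<lambda>u. (Top f u)^2)"
  proof (rule bounded_integrable_M[where C="(S2 f + pi/8)^2"])
    show "(\<lambda>u. (Top f u)^2) \<in> borel_measurable M" using m by measurable
    fix x
    have "\<bar>Top f x\<bar> \<le> S2 f + pi/8" by (rule Top_bound[OF assms])
    thus "\<bar>(Top f x)^2\<bar> \<le> (S2 f + pi/8)^2"
      by (metis abs_ge_zero power2_abs power_mono abs_power2)
  qed
qed

lemma diag_pointwise:
  fixes h :: "nat \<Rightarrow> real \<Rightarrow> real"
  assumes bdd: "\<And>n x. \<bar>h n x\<bar> \<le> C"
  and equi: "\<And>e. e > 0 \<Longrightarrow> \<exists>d>0. \<forall>n x y. \<bar>x - y\<bar> < d \<longrightarrow> \<bar>h n x - h n y\<bar> < e"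
  shows "\<exists>s. strict_mono (s::nat\<Rightarrow>nat) \<and> (\<forall>x. convergent (\<lambda>k. h (s k) x))"
proof -
  obtain m :: "real \<Rightarrow> nat" where "bij_betw m \<rat> UNIV"
    using countable_rat Rats_infinite by (erule countableE_infinite)
  then obtain r :: "nat \<Rightarrow> real" where bij: "bij_betw r UNIV \<rat>"
    using bij_betw_inv by blast
  have dense_r: "\<And>x y. x < y \<Longrightarrow> \<exists>n. x < r n \<and> r n < y"
    by (metis Rats_dense_in_real bij f_the_inv_into_f bij_betw_def)
  let ?P = "\<lambda>n. \<lambda>s. convergent (\<lambda>k. h (s k) (r n))"
  interpret nat: subseqs ?P
  proof (unfold convergent_def, unfold subseqs_def, auto)
    fix n :: nat and s :: "nat \<Rightarrow> nat" assume s: "strict_mono s"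
    have "bounded {-C..C}"
      using bounded_closed_interval by auto
    moreover have "\<And>k. h (s k) (r n) \<in> {-C..C}"
      using bdd by (simp add: abs_le_iff minus_le_iff)
    ultimately have "\<exists>l s'. strict_mono s' \<and> ((\<lambda>k. h (s k) (r n)) \<circ> s') \<longlonglongrightarrow> l"
      using compact_Icc compact_imp_seq_compact seq_compactE by metis
    thus "\<exists>s'. strict_mono (s'::nat\<Rightarrow>nat) \<and> (\<exists>l. (\<lambda>k. h (s (s' k)) (r n)) \<longlonglongrightarrow> l)"
      by (auto simp: comp_def)
  qed
  define d where "d = nat.diagseq"
  have subseq: "strict_mono d"
    unfolding d_def using nat.subseq_diagseq by auto
  have rat_cnv: "?P n d" for n
  proof -
    have Pn_seqseq: "?P n (nat.seqseq (Suc n))"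
      by (rule nat.seqseq_holds)
    have 1: "(\<lambda>k. h ((nat.seqseq (Suc n) \<circ> (\<lambda>k. nat.fold_reduce (Suc n) k
      (Suc n + k))) k) (r n)) = (\<lambda>k. h (nat.seqseq (Suc n) k) (r n)) \<circ>
      (\<lambda>k. nat.fold_reduce (Suc n) k (Suc n + k))"
      by auto
    have 2: "?P n (d \<circ> ((+) (Suc n)))"
      unfolding d_def nat.diagseq_seqseq 1
      by (intro convergent_subseq_convergent Pn_seqseq nat.subseq_diagonal_rest)
    then obtain L where 3: "(\<lambda>na. h (d (na + Suc n)) (r n)) \<longlonglongrightarrow> L"
      by (auto simp: add.commute dest: convergentD)
    then have "(\<lambda>k. h (d k) (r n)) \<longlonglongrightarrow> L"
      by (rule LIMSEQ_offset)
    then show ?thesis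
      by (auto simp: convergent_def)
  qed
  have "convergent (\<lambda>k. h (d k) x)" for x
  proof -
    have "Cauchy (\<lambda>k. h (d k) x)"
      unfolding Cauchy_iff
    proof safe
      fix e :: real assume e: "e > 0"
      obtain dl where dl: "dl > 0" "\<And>n x y. \<bar>x - y\<bar> < dl \<Longrightarrow> \<bar>h n x - h n y\<bar> < e/3"
        using equi[of "e/3"] e by auto
      obtain n where n: "x - dl < r n" "r n < x + dl" using dense_r[of "x - dl" "x + dl"] dl by auto
      have xr: "\<bar>x - r n\<bar> < dl" using n by auto
      have "Cauchy (\<lambda>k. h (d k) (r n))" using rat_cnv[of n] by (rule convergent_Cauchy)
      then obtain N where N: "\<And>k l. k \<ge> N \<Longrightarrow> l \<ge> N \<Longrightarrow> \<bar>h (d k) (r n) - h (d l) (r n)\<bar> < e/3"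
        unfolding Cauchy_iff using e by (metis real_norm_def divide_pos_pos zero_less_numeral)
      show "\<exists>N. \<forall>k\<ge>N. \<forall>l\<ge>N. norm (h (d k) x - h (d l) x) < e"
      proof (intro exI allI impI)
        fix k l assume "k \<ge> N" "l \<ge> N"
        then have a: "\<bar>h (d k) (r n) - h (d l) (r n)\<bar> < e/3" by (rule N)
        have b: "\<bar>h (d k) x - h (d k) (r n)\<bar> < e/3" using dl(2)[OF xr] .
        have c: "\<bar>h (d l) x - h (d l) (r n)\<bar> < e/3" using dl(2)[OF xr] .
        have "\<bar>h (d k) x - h (d l) x\<bar> < e" using a b c unfolding abs_less_iff by linarith
        then show "norm (h (d k) x - h (d l) x) < e" by simp
      qed
    qed
    thus ?thesis by (simp add: Cauchy_convergent_iff)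
  qed
  with subseq show ?thesis by blast
qed

lemma l2_norm_le_S2:
  assumes "l2_norm f \<le> B" shows "S2 f \<le> B^2"
proof -
  have "0 \<le> (LINT u|M. f u * f u)" by simp
  hence "sqrt (LINT u|M. f u * f u) \<le> B" using assms by (simp add: l2_norm_def l2_inner_def)
  hence "(LINT u|M. f u * f u) \<le> B^2"
    using \<open>0 \<le> (LINT u|M. f u * f u)\<close> real_sqrt_le_iff
    by (metis real_le_rsqrt real_sqrt_ge_zero order_trans sqrt_le_D)
  thus ?thesis by (simp add: S2_def power2_eq_square)
qed

lemma compact_Top: "compact_op Top"
  unfolding compact_op_def
proof (intro conjI allI impI)
  fix f assume "sq_int f" thus "sq_int (Top f)" by (rule Top_sq_int)
next
  fix fs :: "nat \<Rightarrow> real \<Rightarrow> real"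
  assume asm: "(\<forall>n. sq_int (fs n)) \<and> (\<exists>B. \<forall>n. l2_norm (fs n) \<le> B)"
  then have sq: "\<And>n. sq_int (fs n)" by blast
  from asm obtain B where B: "\<And>n. l2_norm (fs n) \<le> B" by blast
  have SB: "S2 (fs n) \<le> B^2" for n using l2_norm_le_S2[OF B] .
  define C where "C = B^2 + pi/8"
  have bdd: "\<bar>Top (fs n) x\<bar> \<le> C" for n x
    using Top_bound[OF sq[of n], of x] SB[of n] by (simp add: C_def)
  have equi: "\<exists>d>0. \<forall>n x y. \<bar>x - y\<bar> < d \<longrightarrow> \<bar>Top (fs n) x - Top (fs n) y\<bar> < e" if e: "e > 0" for e
  proof -
    define t where "t = e / (2 * (B^2 + 1))"
    have Bp: "0 < 2 * (B^2 + 1)" by (smt (verit) zero_le_power2)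
    have t: "t > 0" unfolding t_def using e Bp by (rule divide_pos_pos)
    have tS: "t * S2 (fs n) < e/2" for n
    proof -
      have "t * S2 (fs n) \<le> t * B^2" using SB[of n] t by (simp add: mult_left_mono)
      also have "\<dots> < e/2" using e by (simp add: t_def field_simps add_pos_nonneg)
      finally show ?thesis .
    qed
    show ?thesis
    proof (intro exI[of _ "2*t*e"] conjI allI impI)
      show "2*t*e > 0" using t e by simp
      fix n x y assume "\<bar>x - y\<bar> < 2*t*e"
      hence "\<bar>x - y\<bar> / (4*t) < e/2" using t by (simp add: field_simps)
      thus "\<bar>Top (fs n) x - Top (fs n) y\<bar> < e"
        using Top_diff[OF sq[of n] t, of x y] tS[of n] by simp
    qed
  qed
  obtain s where s: "strict_mono s" and cv: "\<And>x. convergent (\<lambda>k. Top (fs (s k)) x)"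
    using diag_pointwise[of "\<lambda>n. Top (fs n)" C, OF bdd equi] by blast
  define g where "g x = lim (\<lambda>k. Top (fs (s k)) x)" for x
  have lim: "(\<lambda>k. Top (fs (s k)) x) \<longlonglongrightarrow> g x" for x
    using cv[of x] by (simp add: g_def convergent_LIMSEQ_iff)
  have gm: "g \<in> borel_measurable M"
    by (rule borel_measurable_LIMSEQ_real[OF lim Top_meas[OF sq]])
  have gb: "\<bar>g x\<bar> \<le> C" for x
    by (rule LIMSEQ_le_const2[OF tendsto_rabs[OF lim]]) (use bdd in auto)
  have sqg: "sq_int g"
    unfolding sq_int_def
  proof
    show "g \<in> borel_measurable M" by (rule gm)
    show "integrable M (\<lambda>u. (g u)^2)"
    proof (rule bounded_integrable_M[where C="C^2"])
      show "(\<lambda>u. (g u)^2) \<in> borel_measurable M" using gm by measurable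
      fix x show "\<bar>(g x)^2\<bar> \<le> C^2"
        using gb[of x] by (metis abs_ge_zero power2_abs power_mono abs_power2)
    qed
  qed
  have "(\<lambda>n. LINT v|M. (Top (fs (s n)) v - g v) * (Top (fs (s n)) v - g v)) \<longlonglongrightarrow> (LINT v|M. 0)"
  proof (rule integral_dominated_convergence[where w="\<lambda>_. (2*C)^2"])
    show "(\<lambda>v. 0::real) \<in> borel_measurable M" by simp
    show "(\<lambda>v. (Top (fs (s n)) v - g v) * (Top (fs (s n)) v - g v)) \<in> borel_measurable M" for n
      using Top_meas[OF sq[of "s n"]] gm by measurable
    show "integrable M (\<lambda>_. (2*C)^2)" by simp
    show "AE x in M. (\<lambda>n. (Top (fs (s n)) x - g x) * (Top (fs (s n)) x - g x)) \<longlonglongrightarrow> 0"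
    proof (intro AE_I2)
      fix x
      have "(\<lambda>n. Top (fs (s n)) x - g x) \<longlonglongrightarrow> g x - g x"
        by (intro tendsto_intros lim)
      hence "(\<lambda>n. (Top (fs (s n)) x - g x) * (Top (fs (s n)) x - g x)) \<longlonglongrightarrow> 0 * 0"
        by (intro tendsto_mult) auto
      thus "(\<lambda>n. (Top (fs (s n)) x - g x) * (Top (fs (s n)) x - g x)) \<longlonglongrightarrow> 0" by simp
    qed
    show "AE x in M. norm ((Top (fs (s n)) x - g x) * (Top (fs (s n)) x - g x)) \<le> (2*C)^2" for n
    proof (intro AE_I2)
      fix x
      have "\<bar>Top (fs (s n)) x - g x\<bar> \<le> 2*C" using bdd[of "s n" x] gb[of x] by simp
      hence "\<bar>Top (fs (s n)) x - g x\<bar> * \<bar>Top (fs (s n)) x - g x\<bar> \<le> (2*C)*(2*C)"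
        by (intro mult_mono) auto
      thus "norm ((Top (fs (s n)) x - g x) * (Top (fs (s n)) x - g x)) \<le> (2*C)^2"
        by (simp add: abs_mult power2_eq_square)
    qed
  qed
  hence "(\<lambda>n. sqrt (LINT v|M. (Top (fs (s n)) v - g v) * (Top (fs (s n)) v - g v))) \<longlonglongrightarrow> sqrt 0"
    by (intro tendsto_real_sqrt) simp
  hence "(\<lambda>n. l2_norm (\<lambda>v. Top (fs (s n)) v - g v)) \<longlonglongrightarrow> 0"
    by (simp add: l2_norm_def l2_inner_def)
  with s sqg show "\<exists>r g. strict_mono r \<and> sq_int g \<and> (\<lambda>n. l2_norm (\<lambda>v. Top (fs (r n)) v - g v)) \<longlonglongrightarrow> 0"
    by blast
qed

lemma K1_sym: "K1 u v = K1 v u" by (simp add: K1_def add.commute)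

lemma self_adjoint_Top: "self_adjoint_op Top"
  unfolding self_adjoint_op_def
proof safe
  fix f g assume f: "sq_int f" and g: "sq_int g"
  have [measurable]: "f \<in> borel_measurable M" "g \<in> borel_measurable M"
    using f g by (auto simp: sq_int_def)
  have fi: "integrable M f" and gi: "integrable M g" using f g by (auto intro: sq_int_integrable)
  interpret fM: finite_measure M by (rule fin_M)
  interpret P: pair_sigma_finite M M
    by (simp add: pair_sigma_finite_def fM.sigma_finite_measure_axioms)
  let ?F = "\<lambda>u v. f u * K1 u v * g v"
  have Fm: "(\<lambda>(u, v). ?F u v) \<in> borel_measurable (M \<Otimes>\<^sub>M M)"
    unfolding K1_def by measurable
  have Fint: "integrable (M \<Otimes>\<^sub>M M) (\<lambda>(u, v). ?F u v)"
  proof (rule P.Fubini_integrable)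
    show "(\<lambda>(u, v). ?F u v) \<in> borel_measurable (M \<Otimes>\<^sub>M M)" by (rule Fm)
    have "integrable M (\<lambda>u. \<bar>f u\<bar> * (LINT v|M. \<bar>g v\<bar>))"
      using fi by simp
    moreover have "(LINT v|M. norm (case (u, v) of (u, v) \<Rightarrow> ?F u v)) = \<bar>f u\<bar> * (LINT v|M. \<bar>K1 u v\<bar> * \<bar>g v\<bar>)" for u
      by (simp add: abs_mult mult.assoc)
    moreover have "integrable M (\<lambda>u. \<bar>f u\<bar> * (LINT v|M. \<bar>K1 u v\<bar> * \<bar>g v\<bar>))"
    proof (rule Bochner_Integration.integrable_bound[OF \<open>integrable M (\<lambda>u. \<bar>f u\<bar> * (LINT v|M. \<bar>g v\<bar>))\<close>])
      show "(\<lambda>u. \<bar>f u\<bar> * (LINT v|M. \<bar>K1 u v\<bar> * \<bar>g v\<bar>)) \<in> borel_measurable M"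
      proof -
        have "(\<lambda>u. LINT v|M. \<bar>K1 u v\<bar> * \<bar>g v\<bar>) \<in> borel_measurable M"
        proof -
          have "(\<lambda>(u,v). \<bar>K1 u v\<bar> * \<bar>g v\<bar>) \<in> borel_measurable (M \<Otimes>\<^sub>M M)"
            unfolding K1_def by measurable
          from fM.borel_measurable_lebesgue_integral[OF this] show ?thesis by simp
        qed
        thus ?thesis by measurable
      qed
      show "AE u in M. norm (\<bar>f u\<bar> * (LINT v|M. \<bar>K1 u v\<bar> * \<bar>g v\<bar>)) \<le> norm (\<bar>f u\<bar> * (LINT v|M. \<bar>g v\<bar>))"
      proof (intro AE_I2)
        fix u
        have "(LINT v|M. \<bar>K1 u v\<bar> * \<bar>g v\<bar>) \<le> (LINT v|M. \<bar>g v\<bar>)"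
          by (rule integral_mono) (auto simp: K1_def gi intro!: Bochner_Integration.integrable_bound[OF integrable_abs[OF gi]] AE_I2)
        moreover have "0 \<le> (LINT v|M. \<bar>K1 u v\<bar> * \<bar>g v\<bar>)" by simp
        ultimately show "norm (\<bar>f u\<bar> * (LINT v|M. \<bar>K1 u v\<bar> * \<bar>g v\<bar>)) \<le> norm (\<bar>f u\<bar> * (LINT v|M. \<bar>g v\<bar>))"
          by (simp add: abs_mult mult_left_mono)
      qed
    qed
    ultimately show "integrable M (\<lambda>u. LINT v|M. norm (case (u, v) of (u, v) \<Rightarrow> ?F u v))"
      by simp
    show "AE u in M. integrable M (\<lambda>v. case (u, v) of (u, v) \<Rightarrow> ?F u v)"
    proof (intro AE_I2)
      fix u
      have "integrable M (\<lambda>v. (f u * K1 u v) * g v)"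
        by (rule Bochner_Integration.integrable_bound[OF integrable_mult_right[OF gi, of "\<bar>f u\<bar>"]])
           (auto simp: K1_def abs_mult intro!: AE_I2)
      thus "integrable M (\<lambda>v. case (u, v) of (u, v) \<Rightarrow> ?F u v)" by simp
    qed
  qed
  have "l2_inner (Top f) g = (LINT v|M. LINT u|M. ?F u v)"
    unfolding l2_inner_def Top_def by simp
  also have "\<dots> = (LINT u|M. LINT v|M. ?F u v)"
    using P.integral_fst[OF Fint] P.integral_snd[OF Fint] by simp
  also have "\<dots> = l2_inner f (Top g)"
    unfolding l2_inner_def Top_def
    by (simp add: K1_sym[of _ u for u] mult.assoc mult.left_commute) (simp only: mult.commute)
  finally show "l2_inner (Top f) g = l2_inner f (Top g)" .
qed

lemma image_refl_half: "(\<lambda>x. pi/2 - x) ` {0..pi/2} = {0..pi/2::real}"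
proof
  show "(\<lambda>x. pi/2 - x) ` {0..pi/2} \<subseteq> {0..pi/2::real}" by auto
  show "{0..pi/2::real} \<subseteq> (\<lambda>x. pi/2 - x) ` {0..pi/2}"
  proof
    fix x :: real assume "x \<in> {0..pi/2}"
    then show "x \<in> (\<lambda>x. pi/2 - x) ` {0..pi/2}"
      by (intro image_eqI[of _ _ "pi/2 - x"]) auto
  qed
qed

lemma ode_rot:
  fixes P :: "real \<Rightarrow> real" and w :: real
  assumes d: "\<And>x. x \<in> {0..pi/2} \<Longrightarrow> (P has_real_derivative w * P (pi/2 - x)) (at x within {0..pi/2})"
  and P0: "P 0 = 0"
  shows "\<forall>x\<in>{0..pi/2}. P x = P (pi/2) * sin (w*x) \<and> P (pi/2 - x) = P (pi/2) * cos (w*x)"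
proof -
  define A where "A = P (pi/2)"
  define Q where "Q x = P (pi/2 - x)" for x
  have dQ: "(Q has_real_derivative - (w * P x)) (at x within {0..pi/2})" if x: "x \<in> {0..pi/2}" for x
  proof -
    have x': "pi/2 - x \<in> {0..pi/2}" using x by auto
    have "(P has_real_derivative w * P (pi/2 - (pi/2 - x))) (at (pi/2 - x) within ((\<lambda>x. pi/2 - x) ` {0..pi/2}))"
      unfolding image_refl_half by (rule d[OF x'])
    moreover have "((\<lambda>x. pi/2 - x) has_real_derivative -1) (at x within {0..pi/2})"
      by (auto intro!: derivative_eq_intros)
    ultimately have "(P \<circ> (\<lambda>x. pi/2 - x) has_real_derivative (w * P (pi/2 - (pi/2 - x))) * -1) (at x within {0..pi/2})"
      by (rule DERIV_image_chain)
    moreover have "Q = (\<lambda>x. P (pi/2 - x))" by (simp add: Q_def fun_eq_iff)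
    ultimately show ?thesis by (simp add: comp_def)
  qed
  define E where "E x = (P x - A * sin (w*x))^2 + (Q x - A * cos (w*x))^2" for x
  have dE: "(E has_real_derivative 0) (at x within {0..pi/2})" if x: "x \<in> {0..pi/2}" for x
  proof -
    have "(E has_real_derivative
       2 * (P x - A * sin (w*x)) * (w * Q x - A * (cos (w*x) * w))
     + 2 * (Q x - A * cos (w*x)) * (- (w * P x) - A * (- sin (w*x) * w))) (at x within {0..pi/2})"
      unfolding E_def
      by (rule derivative_eq_intros d[OF x, folded Q_def] dQ[OF x] refl | simp add: algebra_simps)+
    moreover have "2 * (P x - A * sin (w*x)) * (w * Q x - A * (cos (w*x) * w))
     + 2 * (Q x - A * cos (w*x)) * (- (w * P x) - A * (- sin (w*x) * w)) = 0"
      by (simp add: algebra_simps)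
    ultimately show ?thesis by simp
  qed
  obtain c where c: "\<And>x. x \<in> {0..pi/2} \<Longrightarrow> E x = c"
    using has_field_derivative_zero_constant[of "{0..pi/2::real}" E] dE by auto
  have "E 0 = 0" by (simp add: E_def P0 Q_def A_def)
  then have E0: "E x = 0" if "x \<in> {0..pi/2}" for x
    using c[OF that] c[of 0] by simp
  show ?thesis
  proof
    fix x assume x: "x \<in> {0..pi/2}"
    from E0[OF x] have "P x - A * sin (w*x) = 0 \<and> Q x - A * cos (w*x) = 0"
      unfolding E_def by (simp add: sum_power2_eq_zero_iff)
    thus "P x = P (pi/2) * sin (w*x) \<and> P (pi/2 - x) = P (pi/2) * cos (w*x)"
      by (simp add: A_def Q_def)
  qed
qed

lemma cont_bounded_half:
  fixes h :: "real \<Rightarrow> real"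
  assumes "continuous_on UNIV h"
  obtains C where "\<And>u. u \<in> {0..pi/2} \<Longrightarrow> \<bar>h u\<bar> \<le> C"
proof -
  have "compact (h ` {0..pi/2})"
    by (rule compact_continuous_image[OF continuous_on_subset[OF assms]]) auto
  then have "bounded (h ` {0..pi/2})" by (rule compact_imp_bounded)
  then obtain C where C: "\<And>y. y \<in> h ` {0..pi/2} \<Longrightarrow> norm y \<le> C" by (auto simp: bounded_iff)
  have "\<bar>h u\<bar> \<le> C" if "u \<in> {0..pi/2}" for u using C[of "h u"] that by simp
  then show ?thesis using that by blast
qed

lemma cont_sq_int:
  assumes "continuous_on UNIV h" shows "sq_int h"
proof -
  obtain C where C: "\<And>u. u \<in> {0..pi/2} \<Longrightarrow> \<bar>h u\<bar> \<le> C" using cont_bounded_half[OF assms] by blast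
  have m: "h \<in> borel_measurable M"
    by (rule continuous_imp_measurable_on_sets_lebesgue[OF continuous_on_subset[OF assms]]) auto
  show ?thesis unfolding sq_int_def
  proof
    show "h \<in> borel_measurable M" by (rule m)
    show "integrable M (\<lambda>u. (h u)^2)"
    proof (rule bounded_integrable_M[where C="C^2"])
      show "(\<lambda>u. (h u)^2) \<in> borel_measurable M" using m by measurable
      fix x assume "x \<in> Ihalf"
      hence "\<bar>h x\<bar> \<le> C" using C by (auto simp: Ihalf_def)
      thus "\<bar>(h x)^2\<bar> \<le> C^2"
        by (metis abs_ge_zero power2_abs power_mono abs_power2)
    qed
  qed
qed

lemma Top_HK:
  assumes h: "continuous_on UNIV h" and v: "v \<in> {0..pi/2}"
  shows "Top h v = integral {0..pi/2 - v} h"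
proof -
  have "integrable M (\<lambda>u. h u * K1 u v)" by (rule fK_integrable[OF cont_sq_int[OF h]])
  then have "((\<lambda>u. h u * K1 u v) has_integral Top h v) Ihalf"
    unfolding Top_def by (rule has_integral_integral_lebesgue_on) simp
  moreover have "((\<lambda>u. h u * K1 u v) has_integral Top h v) Ihalf \<longleftrightarrow>
      ((\<lambda>u. if u \<in> {0<..<pi/2 - v} then h u else 0) has_integral Top h v) Ihalf"
    by (rule has_integral_cong) (auto simp: K1_def Ihalf_def)
  ultimately have "((\<lambda>u. if u \<in> {0<..<pi/2 - v} then h u else 0) has_integral Top h v) Ihalf"
    by blast
  moreover have sub: "{0<..<pi/2 - v} \<subseteq> Ihalf" using v by (auto simp: Ihalf_def)
  ultimately have "(h has_integral Top h v) {0<..<pi/2 - v}"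
    using has_integral_restrict[OF sub] by blast
  then have "(h has_integral Top h v) {0..pi/2 - v}"
    by (simp add: has_integral_Icc_iff_Ioo)
  then show ?thesis by (simp add: integral_unique)
qed

lemma Top_ae_cong:
  assumes f: "sq_int f" and g: "sq_int g" and ae: "AE u in M. f u = g u"
  shows "Top f v = Top g v"
  unfolding Top_def
proof (rule integral_cong_AE)
  have [measurable]: "f \<in> borel_measurable M" "g \<in> borel_measurable M"
    using f g by (auto simp: sq_int_def)
  show "(\<lambda>u. f u * K1 u v) \<in> borel_measurable M" by measurable
  show "(\<lambda>u. g u * K1 u v) \<in> borel_measurable M" by measurable
  show "AE u in M. f u * K1 u v = g u * K1 u v" using ae by (rule eventually_mono) simp
qed

lemma eig_form:
  assumes mu: "\<mu> \<noteq> 0" and f: "f \<in> eigenspace_op Top \<mu>"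
  shows "\<exists>A. (AE u in M. f u = A * cos (u / \<mu>)) \<and> (A \<noteq> 0 \<longrightarrow> sin (pi / 2 / \<mu>) = 1)"
proof -
  have sq: "sq_int f" and ae: "AE v in M. Top f v = \<mu> * f v"
    using f by (auto simp: eigenspace_op_def)
  define g where "g = Top f"
  define w where "w = 1 / \<mu>"
  have gc: "continuous_on UNIV g" unfolding g_def by (rule Top_cont[OF sq])
  have wgc: "continuous_on UNIV (\<lambda>u. w * g u)" by (intro continuous_intros gc)
  have ae2: "AE u in M. f u = w * g u"
    using ae proof eventually_elim
    case (elim v)
    then have "Top f v = \<mu> * f v" by simp
    then have "f v = (1/\<mu>) * Top f v" using mu by simp
    then show ?case by (simp only: g_def w_def)
  qed
  have gv: "g v = w * integral {0..pi/2 - v} g" if v: "v \<in> {0..pi/2}" for v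
  proof -
    have "g v = Top f v" by (simp add: g_def)
    also have "\<dots> = Top (\<lambda>u. w * g u) v"
      by (rule Top_ae_cong[OF sq cont_sq_int[OF wgc] ae2])
    also have "\<dots> = integral {0..pi/2 - v} (\<lambda>u. w * g u)"
      by (rule Top_HK[OF wgc v])
    also have "\<dots> = w * integral {0..pi/2 - v} g" by simp
    finally show ?thesis .
  qed
  define P where "P x = integral {0..x} g" for x
  have dP: "(P has_real_derivative w * P (pi/2 - x)) (at x within {0..pi/2})" if x: "x \<in> {0..pi/2}" for x
  proof -
    have "(P has_real_derivative g x) (at x within {0..pi/2})"
      unfolding P_def[abs_def]
      by (rule integral_has_real_derivative[OF continuous_on_subset[OF gc] x]) simp
    moreover have "g x = w * P (pi/2 - x)" using gv[OF x] by (simp add: P_def)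
    ultimately show ?thesis by simp
  qed
  have P0: "P 0 = 0" by (simp add: P_def)
  define A where "A = P (pi/2)"
  have sol: "\<forall>x\<in>{0..pi/2}. P x = A * sin (w*x) \<and> P (pi/2 - x) = A * cos (w*x)"
    unfolding A_def by (rule ode_rot[OF dP P0])
  have gform: "g v = w * A * cos (w * v)" if "v \<in> {0..pi/2}" for v
  proof -
    have "P (pi/2 - v) = A * cos (w * v)" using sol that by blast
    then show ?thesis using gv[OF that] by (simp add: P_def)
  qed
  have inM: "AE u in M. u \<in> {0..pi/2}" by (rule AE_I2) (auto simp: Ihalf_def)
  have fform: "AE u in M. f u = (w * w * A) * cos (u / \<mu>)"
    using ae2 inM
  proof eventually_elim
    case (elim u)
    have wu: "w * u = u / \<mu>" by (simp add: w_def)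
    from elim have "f u = w * g u" "g u = w * A * cos (w * u)" using gform[of u] by auto
    then have "f u = w * w * A * cos (w * u)" by simp
    then show ?case by (simp only: wu)
  qed
  have H: "A \<noteq> 0 \<longrightarrow> sin (pi / 2 / \<mu>) = 1"
  proof
    assume "A \<noteq> 0"
    have "P (pi/2) = A * sin (w * (pi/2))" using sol by auto
    then have "A = A * sin (w * (pi/2))" by (simp only: A_def[symmetric])
    with \<open>A \<noteq> 0\<close> have s1: "sin (w * (pi/2)) = 1" by simp
    have eq: "w * (pi/2) = pi / 2 / \<mu>" by (simp add: w_def)
    show "sin (pi / 2 / \<mu>) = 1" using s1 by (simp only: eq)
  qed
  show ?thesis
  proof (intro exI[of _ "w * w * A"] conjI impI)
    show "AE u in M. f u = w * w * A * cos (u / \<mu>)" by (rule fform)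
    assume "w * w * A \<noteq> 0"
    then have "A \<noteq> 0" by auto
    with H show "sin (pi / 2 / \<mu>) = 1" by blast
  qed
qed

lemma sin_one_form:
  assumes "sin (pi / 2 / \<mu>) = 1" and mu: "\<mu> \<noteq> 0"
  shows "\<exists>k::int. \<mu> = 1 / (4 * real_of_int k + 1)"
proof -
  obtain n :: int where n: "pi / 2 / \<mu> = (2 * real_of_int n + 1/2) * pi"
    using assms sin_eq_1 by blast
  then have "pi * 1 = pi * ((4 * real_of_int n + 1) * \<mu>)" using mu by (simp add: field_simps)
  then have e: "1 = (4 * real_of_int n + 1) * \<mu>" by simp
  then have "4 * real_of_int n + 1 \<noteq> 0" by auto
  with e have "\<mu> = 1 / (4 * real_of_int n + 1)" by (simp add: field_simps)
  thus ?thesis by blast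
qed

lemma sin_cos_quarter:
  fixes k :: int
  shows "sin ((4 * real_of_int k + 1) * (pi/2)) = 1" "cos ((4 * real_of_int k + 1) * (pi/2)) = 0"
proof -
  have e: "(4 * real_of_int k + 1) * (pi/2) = (2*pi) * real_of_int k + pi/2" by (simp add: algebra_simps)
  show "sin ((4 * real_of_int k + 1) * (pi/2)) = 1" unfolding e by (simp add: sin_add)
  show "cos ((4 * real_of_int k + 1) * (pi/2)) = 0" unfolding e by (simp add: cos_add)
qed

lemma LINT_M_HK:
  fixes h :: "real \<Rightarrow> real"
  assumes h: "continuous_on UNIV h"
  shows "(LINT u|M. h u) = integral {0..pi/2} h"
proof -
  have "(LINT u|M. h u) = Top h 0"
    unfolding Top_def by (rule Bochner_Integration.integral_cong) (auto simp: K1_def Ihalf_def)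
  also have "\<dots> = integral {0..pi/2} h" using Top_HK[OF h, of 0] by simp
  finally show ?thesis .
qed

lemma integral_cos_lin:
  fixes a c :: real
  assumes a: "a \<noteq> 0" and c: "0 \<le> c"
  shows "integral {0..c} (\<lambda>u. cos (a * u)) = sin (a * c) / a"
proof -
  have "((\<lambda>u. cos (a * u)) has_integral (sin (a * c) / a - sin (a * 0) / a)) {0..c}"
  proof (rule fundamental_theorem_of_calculus)
    show "0 \<le> c" by (rule c)
  next
    fix x :: real
    have "((\<lambda>u. sin (a * u) / a) has_real_derivative cos (a * x)) (at x)"
      using a by (auto intro!: derivative_eq_intros)
    then show "((\<lambda>u. sin (a * u) / a) has_vector_derivative cos (a * x)) (at x within {0..c})"
      by (simp add: has_real_derivative_iff_has_vector_derivative has_vector_derivative_at_within)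
  qed
  then show ?thesis by (simp add: integral_unique)
qed

lemma cos_eigen:
  fixes k :: int
  defines "a \<equiv> 4 * real_of_int k + 1"
  shows "(\<lambda>u. cos (a * u)) \<in> eigenspace_op Top (1 / a)"
proof -
  have a0: "a \<noteq> 0"
  proof
    assume "a = 0"
    then have "4 * real_of_int k = -1" by (simp add: a_def)
    then have "4 * k = -1" by linarith
    then show False by presburger
  qed
  have hc: "continuous_on UNIV (\<lambda>u. cos (a * u))" by (intro continuous_intros)
  have "Top (\<lambda>u. cos (a * u)) v = 1 / a * cos (a * v)" if v: "v \<in> {0..pi/2}" for v
  proof -
    have "Top (\<lambda>u. cos (a * u)) v = integral {0..pi/2 - v} (\<lambda>u. cos (a * u))"
      by (rule Top_HK[OF hc v])
    also have "\<dots> = sin (a * (pi/2 - v)) / a"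
      by (rule integral_cos_lin[OF a0]) (use v in auto)
    also have "sin (a * (pi/2 - v)) = sin (a * (pi/2) - a * v)" by (simp add: algebra_simps)
    also have "\<dots> = cos (a * v)"
      using sin_cos_quarter[of k] by (simp add: sin_diff a_def)
    finally show ?thesis by simp
  qed
  then show ?thesis
    unfolding eigenspace_op_def
    by (auto intro!: cont_sq_int[OF hc] AE_I2 simp: Ihalf_def)
qed

lemma cos_not_ae0:
  fixes k :: int
  defines "a \<equiv> 4 * real_of_int k + 1"
  shows "\<not> (AE u in M. cos (a * u) = 0)"
proof
  assume ae: "AE u in M. cos (a * u) = 0"
  have a1: "\<bar>a\<bar> \<ge> 1"
  proof (cases "k \<ge> 0")
    case True then show ?thesis by (simp add: a_def)
  next
    case False
    then have "real_of_int k \<le> -1" by simp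
    then show ?thesis by (simp add: a_def)
  qed
  have "AE u \<in> Ihalf in lebesgue. u \<in> {u. cos (a * u) = 0}"
    using ae by (simp add: AE_restrict_space_iff)
  moreover have "closed {u. cos (a * u) = 0}"
    by (intro closed_Collect_eq continuous_intros)
  moreover have "open Ihalf" by (simp add: Ihalf_def)
  moreover define u0 where "u0 = pi / (4 * \<bar>a\<bar>)"
  moreover have u0: "u0 \<in> Ihalf"
  proof -
    have "0 < u0" using a1 by (simp add: u0_def)
    moreover have "u0 \<le> pi / 4" unfolding u0_def
      by (rule divide_left_mono) (use a1 in auto)
    ultimately show ?thesis by (simp add: Ihalf_def)
  qed
  ultimately have "cos (a * u0) = 0"
    using mem_closed_if_AE_lebesgue_open by blast
  moreover have "\<bar>a * u0\<bar> = pi / 4" using a1 by (simp add: u0_def abs_mult)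
  then have "a * u0 \<le> pi/4" "- (a * u0) \<le> pi/4" using abs_le_iff[of "a * u0" "pi/4"] by auto
  then have "cos (a * u0) > 0"
    using pi_gt_zero by (intro cos_gt_zero_pi) linarith+
  ultimately show False by simp
qed

lemma deriv_sin_half:
  fixes c x :: real assumes "c \<noteq> 0"
  shows "((\<lambda>u. sin (c * u) / (2 * c)) has_real_derivative cos (c * x) / 2) (at x)"
  using assms by (auto intro!: derivative_eq_intros simp: field_simps)

lemma ortho_cos:
  fixes k j :: int
  assumes kj: "k \<noteq> j"
  shows "l2_inner (\<lambda>u. cos ((4 * real_of_int k + 1) * u)) (\<lambda>u. cos ((4 * real_of_int j + 1) * u)) = 0"
proof -
  define a where "a = 4 * real_of_int k + 1"
  define b where "b = 4 * real_of_int j + 1"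
  have amb: "a - b \<noteq> 0" using kj by (simp add: a_def b_def)
  have apb: "a + b \<noteq> 0"
  proof
    assume "a + b = 0"
    then have "real_of_int (4 * k + 4 * j + 2) = 0" by (simp add: a_def b_def)
    then have "4 * k + 4 * j + 2 = 0" by linarith
    then show False by presburger
  qed
  define F where "F u = sin ((a - b) * u) / (2 * (a - b)) + sin ((a + b) * u) / (2 * (a + b))" for u
  have "((\<lambda>u. cos (a * u) * cos (b * u)) has_integral (F (pi/2) - F 0)) {0..pi/2}"
  proof (rule fundamental_theorem_of_calculus)
    show "0 \<le> pi/2" by simp
  next
    fix x :: real
    have "(F has_real_derivative cos ((a - b) * x) / 2 + cos ((a + b) * x) / 2) (at x)"
      unfolding F_def[abs_def]
      by (rule DERIV_add[OF deriv_sin_half[OF amb] deriv_sin_half[OF apb]])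
    moreover have "cos ((a - b) * x) / 2 + cos ((a + b) * x) / 2 = cos (a * x) * cos (b * x)"
      by (simp add: cos_times_cos algebra_simps add_divide_distrib)
    ultimately show "(F has_vector_derivative cos (a * x) * cos (b * x)) (at x within {0..pi/2})"
      by (simp add: has_real_derivative_iff_has_vector_derivative has_vector_derivative_at_within)
  qed
  moreover have "F (pi/2) = 0"
  proof -
    have e1: "(a - b) * (pi/2) = (2*pi) * real_of_int (k - j)" by (simp add: a_def b_def algebra_simps)
    have e2: "(a + b) * (pi/2) = (2*pi) * real_of_int (k + j) + pi" by (simp add: a_def b_def algebra_simps)
    have s1: "sin ((2*pi) * real_of_int (k - j)) = 0" by (rule sin_int_2pin)
    have s2: "sin ((2*pi) * real_of_int (k + j) + pi) = 0" by (simp only: sin_periodic_pi sin_int_2pin)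
    show ?thesis unfolding F_def e1 e2 s1 s2 by simp
  qed
  moreover have "F 0 = 0" by (simp add: F_def)
  ultimately have "integral {0..pi/2} (\<lambda>u. cos (a * u) * cos (b * u)) = 0"
    by (simp add: integral_unique)
  moreover have "l2_inner (\<lambda>u. cos (a * u)) (\<lambda>u. cos (b * u)) = integral {0..pi/2} (\<lambda>u. cos (a * u) * cos (b * u))"
    unfolding l2_inner_def by (rule LINT_M_HK) (intro continuous_intros)
  ultimately show ?thesis by (simp add: a_def b_def)
qed

lemma ind_f_integrable:
  fixes f :: "real \<Rightarrow> real"
  assumes f: "integrable M f" and A: "A \<in> sets borel"
  shows "integrable M (\<lambda>x. indicator A x * f x)"
proof -
  have [measurable]: "f \<in> borel_measurable M" using f by auto
  have [measurable]: "A \<in> sets borel" by (rule A)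
  show ?thesis
    by (rule Bochner_Integration.integrable_bound[OF integrable_abs[OF f]])
       (auto simp: indicator_def intro!: AE_I2)
qed

lemma borel_zero_all:
  fixes f :: "real \<Rightarrow> real"
  assumes f: "integrable M f"
    and G: "\<And>c. (LINT x|M. indicator {..<c} x * f x) = 0"
    and A: "A \<in> sets borel"
  shows "(LINT x|M. indicator A x * f x) = 0"
proof -
  have fm[measurable]: "f \<in> borel_measurable M" using f by auto
  have tot: "(LINT x|M. f x) = 0"
  proof -
    have "(LINT x|M. f x) = (LINT x|M. indicator {..<pi/2} x * f x)"
      by (rule Bochner_Integration.integral_cong) (auto simp: Ihalf_def)
    then show ?thesis using G by simp
  qed
  have "Int_stable (range lessThan :: real set set)"
    unfolding Int_stable_def
  proof safe
    fix a b :: real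
    show "{..<a} \<inter> {..<b} \<in> range lessThan"
    proof -
      have "{..<a} \<inter> {..<b} = {..<min a b}" by auto
      then show ?thesis by (metis rangeI)
    qed
  qed
  moreover have "(range lessThan :: real set set) \<subseteq> Pow UNIV" by auto
  moreover have "A \<in> sigma_sets UNIV (range lessThan)"
    using A unfolding borel_Iio by simp
  ultimately show ?thesis
  proof (induction rule: sigma_sets_induct_disjoint)
    case (basic A) then show ?case using G by auto
  next
    case empty then show ?case by simp
  next
    case (compl A)
    then have Ab: "A \<in> sets borel" unfolding borel_Iio by simp
    have "(LINT x|M. indicator (UNIV - A) x * f x) = (LINT x|M. f x - indicator A x * f x)"
      by (rule Bochner_Integration.integral_cong) (auto simp: indicator_def)
    also have "\<dots> = (LINT x|M. f x) - (LINT x|M. indicator A x * f x)"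
      by (rule Bochner_Integration.integral_diff[OF f ind_f_integrable[OF f Ab]])
    also have "\<dots> = 0" using tot compl by simp
    finally show ?case .
  next
    case (union A)
    then have Ab: "\<And>i. A i \<in> sets borel" unfolding borel_Iio by auto
    have "(\<lambda>n. LINT x|M. (\<Sum>i<n. indicator (A i) x * f x)) \<longlonglongrightarrow> (LINT x|M. indicator (\<Union>i. A i) x * f x)"
    proof (rule integral_dominated_convergence[where w="\<lambda>x. \<bar>f x\<bar>"])
      have [measurable]: "\<And>i. A i \<in> sets borel" by (rule Ab)
      have "(\<Union>i. A i) \<in> sets borel" using Ab by auto
      then show "(\<lambda>x. indicator (\<Union>i. A i) x * f x) \<in> borel_measurable M" by measurable
      show "(\<lambda>x. \<Sum>i<n. indicator (A i) x * f x) \<in> borel_measurable M" for n by measurable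
      show "integrable M (\<lambda>x. \<bar>f x\<bar>)" using f by simp
      show "AE x in M. (\<lambda>n. \<Sum>i<n. indicator (A i) x * f x) \<longlonglongrightarrow> indicator (\<Union>i. A i) x * f x"
      proof (intro AE_I2)
        fix x
        have "(\<lambda>i. indicator (A i) x * f x) sums (indicator (\<Union>i. A i) x * f x)"
          using union.hyps(1) unfolding disjoint_family_on_def
          by (intro sums_mult2 indicator_sums) auto
        then show "(\<lambda>n. \<Sum>i<n. indicator (A i) x * f x) \<longlonglongrightarrow> indicator (\<Union>i. A i) x * f x"
          by (simp add: sums_def)
      qed
      show "AE x in M. norm (\<Sum>i<n. indicator (A i) x * f x) \<le> \<bar>f x\<bar>" for n
      proof (intro AE_I2)
        fix x
        have "(\<Sum>i<n. indicator (A i) x * f x) = (\<Sum>i<n. indicator (A i) x) * f x"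
          by (simp add: sum_distrib_right)
        moreover have "(\<Sum>i<n. indicator (A i) x :: real) \<le> 1"
        proof -
          have "(\<Sum>i<n. indicator (A i) x :: real) = indicator (\<Union>i<n. A i) x"
            by (intro indicator_UN_disjoint[symmetric] finite_lessThan disjoint_family_on_mono[OF subset_UNIV union.hyps(1)])
          then show ?thesis by (simp add: indicator_def)
        qed
        moreover have "0 \<le> (\<Sum>i<n. indicator (A i) x :: real)" by (simp add: sum_nonneg)
        ultimately show "norm (\<Sum>i<n. indicator (A i) x * f x) \<le> \<bar>f x\<bar>"
          by (simp only: real_norm_def abs_mult) (intro mult_left_le_one_le, auto)
      qed
    qed
    moreover have "(LINT x|M. (\<Sum>i<n. indicator (A i) x * f x)) = 0" for n
    proof -
      have "(LINT x|M. (\<Sum>i<n. indicator (A i) x * f x)) = (\<Sum>i<n. LINT x|M. indicator (A i) x * f x)"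
        by (rule Bochner_Integration.integral_sum) (use ind_f_integrable[OF f Ab] in auto)
      also have "\<dots> = 0" using union.IH by simp
      finally show ?thesis .
    qed
    ultimately have "(\<lambda>n. 0::real) \<longlonglongrightarrow> (LINT x|M. indicator (\<Union>i. A i) x * f x)"
      by simp
    then show ?case using LIMSEQ_unique[OF _ tendsto_const] by blast
  qed
qed

lemma ae_zero_of_G:
  fixes f :: "real \<Rightarrow> real"
  assumes f: "integrable M f" and G: "\<And>c. (LINT x|M. indicator {..<c} x * f x) = 0"
  shows "AE x in M. f x = 0"
proof -
  interpret fM: finite_measure M by (rule fin_M)
  show ?thesis
  proof (rule fM.density_zero[OF f])
  fix A assume A: "A \<in> sets M"
  have fm[measurable]: "f \<in> borel_measurable M" using f by auto
  have Al: "A \<in> sets lebesgue"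
    using A by (simp add: sets_restrict_space_iff)
  obtain B N where B: "B \<in> sets borel" "negligible N" "B \<union> N = A"
    using sets_lebesgue_almost_borel[OF Al] by metis
  have "N \<in> null_sets lebesgue" using B(2) by (simp add: negligible_iff_null_sets)
  then have "AE x in lebesgue. x \<notin> N" by (rule AE_not_in)
  then have aeN: "AE x in M. x \<notin> N"
    by (subst AE_restrict_space_iff) (auto elim: eventually_mono)
  have [measurable]: "A \<in> sets M" by (rule A)
  have [measurable]: "B \<in> sets borel" by (rule B(1))
  have "set_lebesgue_integral M A f = (LINT x|M. indicator A x * f x)"
    by (simp add: set_lebesgue_integral_def)
  also have "\<dots> = (LINT x|M. indicator B x * f x)"
  proof (rule integral_cong_AE)
    show "(\<lambda>x. indicator A x * f x) \<in> borel_measurable M" by measurable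
    show "(\<lambda>x. indicator B x * f x) \<in> borel_measurable M" by measurable
    show "AE x in M. indicator A x * f x = indicator B x * f x"
      using aeN by (rule eventually_mono) (use B(3) in \<open>auto simp: indicator_def\<close>)
  qed
  also have "\<dots> = 0" by (rule borel_zero_all[OF f G B(1)])
  finally show "set_lebesgue_integral M A f = 0" .
  qed
qed

lemma zero_not_eig: "\<not> is_eigenvalue Top 0"
proof
  assume "is_eigenvalue Top 0"
  then obtain f where f: "f \<in> eigenspace_op Top 0" and nz: "\<not> (AE u in M. f u = 0)"
    by (auto simp: is_eigenvalue_def)
  have sq: "sq_int f" and ae: "AE v in M. Top f v = 0"
    using f by (auto simp: eigenspace_op_def)
  have fi: "integrable M f" by (rule sq_int_integrable[OF sq])
  have fm[measurable]: "f \<in> borel_measurable M" using sq by (simp add: sq_int_def)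
  have tc: "continuous_on UNIV (Top f)" by (rule Top_cont[OF sq])
  have z1: "Top f v = 0" if "v \<in> Ihalf" for v
  proof -
    have "AE x \<in> Ihalf in lebesgue. x \<in> {y. Top f y = 0}"
      using ae by (subst (asm) AE_restrict_space_iff) auto
    moreover have "closed {y. Top f y = 0}"
      by (rule closed_Collect_eq[OF continuous_on_subset[OF tc] continuous_on_const]) auto
    moreover have "open Ihalf" by (simp add: Ihalf_def)
    ultimately show ?thesis using mem_closed_if_AE_lebesgue_open that by blast
  qed
  have z2: "Top f v = 0" if "v \<in> {0..pi/2}" for v
  proof -
    have "closure Ihalf = {0..pi/2}" by (simp add: Ihalf_def)
    then show ?thesis
      using continuous_constant_on_closure[OF continuous_on_subset[OF tc] z1, where x=v] that by auto
  qed
  have G: "(LINT x|M. indicator {..<c} x * f x) = 0" for c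
  proof (cases "c \<le> 0")
    case True
    have "(LINT x|M. indicator {..<c} x * f x) = (LINT x|M. 0)"
      by (rule Bochner_Integration.integral_cong) (use True in \<open>auto simp: Ihalf_def indicator_def\<close>)
    then show ?thesis by simp
  next
    case False
    define v where "v = max 0 (pi/2 - c)"
    have v: "v \<in> {0..pi/2}" using False pi_gt_zero by (auto simp: v_def max_def)
    have "(LINT x|M. indicator {..<c} x * f x) = Top f v"
      unfolding Top_def
      by (rule Bochner_Integration.integral_cong) (use False in \<open>auto simp: Ihalf_def indicator_def K1_def v_def max_def\<close>)
    then show ?thesis using z2[OF v] by simp
  qed
  have "AE x in M. f x = 0" by (rule ae_zero_of_G[OF fi G])
  with nz show False by simp
qed

lemma a_ne0: "4 * real_of_int k + 1 \<noteq> 0"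
proof
  assume "4 * real_of_int k + 1 = 0"
  then have "real_of_int (4 * k + 1) = 0" by simp
  then have "4 * k + 1 = 0" by linarith
  then show False by presburger
qed

lemma eigen_char: "is_eigenvalue Top \<mu> \<longleftrightarrow> (\<exists>k::int. \<mu> = 1 / (4 * real_of_int k + 1))"
proof
  assume ev: "is_eigenvalue Top \<mu>"
  have mu: "\<mu> \<noteq> 0" using ev zero_not_eig by auto
  from ev obtain f where f: "f \<in> eigenspace_op Top \<mu>" and nz: "\<not> (AE u in M. f u = 0)"
    by (auto simp: is_eigenvalue_def)
  obtain A where A: "AE u in M. f u = A * cos (u / \<mu>)" and As: "A \<noteq> 0 \<longrightarrow> sin (pi / 2 / \<mu>) = 1"
    using eig_form[OF mu f] by blast
  have "A \<noteq> 0"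
  proof
    assume "A = 0"
    with A have "AE u in M. f u = 0" by simp
    with nz show False by simp
  qed
  with As have "sin (pi / 2 / \<mu>) = 1" by simp
  then show "\<exists>k::int. \<mu> = 1 / (4 * real_of_int k + 1)" by (rule sin_one_form[OF _ mu])
next
  assume "\<exists>k::int. \<mu> = 1 / (4 * real_of_int k + 1)"
  then obtain k :: int where k: "\<mu> = 1 / (4 * real_of_int k + 1)" by blast
  show "is_eigenvalue Top \<mu>"
    unfolding is_eigenvalue_def k
    by (rule bexI[OF _ cos_eigen[of k]]) (use cos_not_ae0[of k] in simp)
qed

theorem lemma3:
  shows "compact_op Top \<and> self_adjoint_op Top
    \<and> {\<mu>. is_eigenvalue Top \<mu>} = {1 / (4 * real_of_int k + 1) | k. True}
    \<and> (\<forall>k::int. (\<lambda>u. cos ((4 * real_of_int k + 1) * u)) \<in> eigenspace_op Top (1 / (4 * real_of_int k + 1))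
          \<and> (\<forall>f \<in> eigenspace_op Top (1 / (4 * real_of_int k + 1)).
               \<exists>c. AE u in M. f u = c * cos ((4 * real_of_int k + 1) * u)))
    \<and> (\<forall>k j::int. k \<noteq> j \<longrightarrow>
          l2_inner (\<lambda>u. cos ((4 * real_of_int k + 1) * u)) (\<lambda>u. cos ((4 * real_of_int j + 1) * u)) = 0)"
proof (intro conjI allI impI ballI)
  show "compact_op Top" by (rule compact_Top)
  show "self_adjoint_op Top" by (rule self_adjoint_Top)
  show "{\<mu>. is_eigenvalue Top \<mu>} = {1 / (4 * real_of_int k + 1) | k. True}"
    using eigen_char by auto
  fix k :: int
  show "(\<lambda>u. cos ((4 * real_of_int k + 1) * u)) \<in> eigenspace_op Top (1 / (4 * real_of_int k + 1))"
    by (rule cos_eigen)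
  fix f assume f: "f \<in> eigenspace_op Top (1 / (4 * real_of_int k + 1))"
  have mu: "1 / (4 * real_of_int k + 1) \<noteq> 0" using a_ne0[of k] by simp
  obtain A where A: "AE u in M. f u = A * cos (u / (1 / (4 * real_of_int k + 1)))"
    using eig_form[OF mu f] by blast
  show "\<exists>c. AE u in M. f u = c * cos ((4 * real_of_int k + 1) * u)"
  proof (intro exI[of _ A])
    show "AE u in M. f u = A * cos ((4 * real_of_int k + 1) * u)"
      using A by (rule eventually_mono) (simp add: mult.commute)
  qed
next
  fix k j :: int assume "k \<noteq> j"
  then show "l2_inner (\<lambda>u. cos ((4 * real_of_int k + 1) * u)) (\<lambda>u. cos ((4 * real_of_int j + 1) * u)) = 0"
    by (rule ortho_cos)
qed

end
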